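(* For every two absolutely continuous probability measures $\mu,\nu$ on $\mathbb R$, there exist random variables $X,Y$ on a common probability space, distributed $\mu$ and $\nu$ respectively, such that $X-Y$ is almost surely a rational number. *)

theory Defs
  imports "HOL-Probability.Probability"
begin

end

theory Submission
  imports Defs
begin


lemma emeasure_lborel_translate:
  fixes K :: "real set" assumes K: "K \<in> sets borel"
  shows "emeasure lborel {x. x - s \<in> K} = emeasure lborel K"
proof -
  have "emeasure lborel K = emeasure (distr lborel borel ((+) (-s))) K"
    by (simp add: lborel_distr_plus)
  also have "\<dots> = emeasure lborel ((+) (-s) -` K)"
    using K by (subst emeasure_distr) auto
  also have "(+) (-s) -` K = {x. x - s \<in> K}" by auto
  finally show ?thesis by simp
qed

lemma steinhaus_nonempty:
  fixes C :: "real set"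
  assumes C: "C \<in> sets borel" and pos: "0 < emeasure lborel C"
  shows "\<exists>\<delta>>0. \<forall>s. \<bar>s\<bar> < \<delta> \<longrightarrow> (\<exists>x\<in>C. x - s \<in> C)"
proof -
  have "\<exists>n::nat. 0 < emeasure lborel (C \<inter> {-real n..real n})"
  proof (rule ccontr)
    assume "\<not> ?thesis"
    then have "C \<inter> {-real n..real n} \<in> null_sets lborel" for n
      using C by (auto simp: null_sets_def)
    then have "(\<Union>n. C \<inter> {-real n..real n}) \<in> null_sets lborel" by blast
    moreover have "(\<Union>n. C \<inter> {-real n..real n}) = C"
    proof safe
      fix x assume "x \<in> C"
      obtain n :: nat where "\<bar>x\<bar> \<le> real n" using real_arch_simple by blast
      then show "x \<in> (\<Union>n. C \<inter> {-real n..real n})" using \<open>x \<in> C\<close> by (intro UN_I[of n]) auto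
    qed
    ultimately show False using pos by (simp add: null_sets_def)
  qed
  then obtain n :: nat where npos: "0 < emeasure lborel (C \<inter> {-real n..real n})" by blast
  define D where "D = C \<inter> {-real n..real n}"
  have D: "D \<in> sets borel" using C by (simp add: D_def)
  define M where "M = density lborel (indicator {-real n..real n})"
  have sM: "sets M = sets borel" by (simp add: M_def)
  have eM: "emeasure M A = emeasure lborel (A \<inter> {-real n..real n})" if "A \<in> sets borel" for A
  proof -
    have "emeasure M A = (\<integral>\<^sup>+x. indicator {-real n..real n} x * indicator A x \<partial>lborel)"
      using that unfolding M_def by (subst emeasure_density) auto
    also have "\<dots> = (\<integral>\<^sup>+x. indicator (A \<inter> {-real n..real n}) x \<partial>lborel)"
      by (intro nn_integral_cong) (simp split: split_indicator)
    also have "\<dots> = emeasure lborel (A \<inter> {-real n..real n})"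
      using that by (intro nn_integral_indicator) auto
    finally show ?thesis .
  qed
  have fin: "emeasure M (space M) \<noteq> \<infinity>"
    using eM[of UNIV] by (simp add: M_def)
  have DM: "emeasure M D = emeasure lborel D" using eM[OF D] by (simp add: D_def Int_assoc)
  have Dfin: "emeasure lborel D < \<infinity>"
  proof -
    have "emeasure lborel D \<le> emeasure lborel {-real n..real n}"
      by (rule emeasure_mono) (auto simp: D_def)
    then have "emeasure lborel D \<le> ennreal (2 * real n)" by simp
    then show ?thesis using ennreal_less_top[of "2*real n"] by (metis infinity_ennreal_def le_less_trans)
  qed
  define d where "d = measure lborel D"
  have Dd: "emeasure lborel D = ennreal d" using Dfin by (simp add: d_def emeasure_eq_ennreal_measure)
  have Dpos: "0 < d" using npos Dd by (simp add: D_def)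
  have "emeasure M D = (SUP K \<in> {K. K \<subseteq> D \<and> compact K}. emeasure M K)"
    by (rule inner_regular[OF sM fin D])
  moreover have "ennreal (d / 2) < emeasure M D"
    using Dpos DM Dd by (simp add: ennreal_lessI)
  ultimately obtain K where K: "K \<subseteq> D" "compact K" "ennreal (d / 2) < emeasure M K"
    by (metis (no_types, lifting) less_SUP_iff mem_Collect_eq)
  have Kb: "K \<in> sets borel" using K(2) by (simp add: borel_compact)
  have KD: "K \<inter> {-real n..real n} = K" using K(1) by (auto simp: D_def)
  have KM: "emeasure M K = emeasure lborel K" using eM[OF Kb] KD by simp
  have Kfin: "emeasure lborel K < \<infinity>"
    using emeasure_mono[OF K(1), of lborel] Dfin D by (simp add: le_less_trans)
  define k where "k = measure lborel K"
  have Kk: "emeasure lborel K = ennreal k" using Kfin by (simp add: k_def emeasure_eq_ennreal_measure)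
  have kpos: "0 < k"
  proof -
    have "ennreal (d/2) < ennreal k" using K(3) KM Kk by simp
    then have "d/2 < k" using Dpos by (subst (asm) ennreal_less_iff) auto
    then show ?thesis using Dpos by simp
  qed
  obtain U where U: "open U" "K \<subseteq> U" "emeasure lborel (U - K) < k"
    using outer_regular_lborel[OF Kb kpos] by blast
  obtain \<delta> where \<delta>: "\<delta> > 0" "(\<Union>x\<in>K. ball x \<delta>) \<subseteq> U"
    using compact_subset_open_imp_ball_epsilon_subset[OF K(2) U(1) U(2)] by blast
  have "\<exists>x\<in>C. x - s \<in> C" if s: "\<bar>s\<bar> < \<delta>" for s
  proof (rule ccontr)
    assume nex: "\<not> ?thesis"
    define K' where "K' = {x. x - s \<in> K}"
    have K'b: "K' \<in> sets borel" using Kb unfolding K'_def by measurable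
    have K'm: "emeasure lborel K' = ennreal k" using emeasure_lborel_translate[OF Kb] Kk by (simp add: K'_def)
    have disj: "K \<inter> K' = {}" using nex K(1) by (auto simp: K'_def D_def)
    have sub: "K \<union> K' \<subseteq> U"
    proof -
      have "K' \<subseteq> U"
      proof
        fix x assume "x \<in> K'"
        then have "x - s \<in> K" by (simp add: K'_def)
        moreover have "x \<in> ball (x - s) \<delta>" using s by (simp add: dist_real_def)
        ultimately show "x \<in> U" using \<delta>(2) by blast
      qed
      then show ?thesis using U(2) by blast
    qed
    have Ub: "U \<in> sets borel" using U(1) by simp
    have "ennreal (2 * k) = emeasure lborel (K \<union> K')"
      using plus_emeasure[of K lborel K', symmetric] Kb K'b disj Kk K'm kpos
      by (simp add: ennreal_plus[symmetric] del: ennreal_plus)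
    also have "\<dots> \<le> emeasure lborel U" using sub Ub by (intro emeasure_mono) auto
    also have "\<dots> = emeasure lborel K + emeasure lborel (U - K)"
      using plus_emeasure[of K lborel "U - K"] Kb Ub U(2) by (simp add: Un_absorb1 sets.Diff)
    also have "\<dots> < ennreal k + ennreal k" using U(3) Kk by (simp add: ennreal_add_left_cancel_less)
    also have "\<dots> = ennreal (2 * k)" using kpos by (simp add: ennreal_plus[symmetric] del: ennreal_plus)
    finally show False by simp
  qed
  then show ?thesis using \<delta>(1) by blast
qed


lemma rational_shift_overlap:
  fixes A B :: "real set"
  assumes A: "A \<in> sets borel" and B: "B \<in> sets borel"
    and pA: "0 < emeasure lborel A" and pB: "0 < emeasure lborel B"
  shows "\<exists>q\<in>\<rat>. \<exists>x\<in>A. x - q \<in> B"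
proof -
  define f where "f = (\<lambda>x t. indicator A x * indicator B (x - t) :: ennreal)"
  have meas: "case_prod f \<in> borel_measurable (lborel \<Otimes>\<^sub>M lborel)"
    unfolding f_def using A B by measurable
  have inner: "(\<integral>\<^sup>+t. f x t \<partial>lborel) = indicator A x * emeasure lborel B" for x
  proof -
    have "(\<integral>\<^sup>+t. f x t \<partial>lborel) = indicator A x * (\<integral>\<^sup>+t. indicator B (x - t) \<partial>lborel)"
      unfolding f_def by (rule nn_integral_cmult) (use B in measurable)
    also have "(\<integral>\<^sup>+t. indicator B (x - t) \<partial>lborel) = (\<integral>\<^sup>+t. indicator B t \<partial>lborel)"
      using nn_integral_real_affine[of "indicator B" "-1" x] B by simp
    also have "\<dots> = emeasure lborel B" using B by simp
    finally show ?thesis .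
  qed
  have "(\<integral>\<^sup>+t. (\<integral>\<^sup>+x. f x t \<partial>lborel) \<partial>lborel) = (\<integral>\<^sup>+x. (\<integral>\<^sup>+t. f x t \<partial>lborel) \<partial>lborel)"
    by (rule lborel_pair.Fubini'[OF meas])
  also have "\<dots> = (\<integral>\<^sup>+x. indicator A x * emeasure lborel B \<partial>lborel)" by (simp add: inner)
  also have "\<dots> = emeasure lborel A * emeasure lborel B"
    using A by (subst nn_integral_multc) auto
  finally have "0 < (\<integral>\<^sup>+t. (\<integral>\<^sup>+x. f x t \<partial>lborel) \<partial>lborel)"
    using pA pB by (simp add: ennreal_zero_less_mult_iff)
  then obtain t0 where t0: "(\<integral>\<^sup>+x. f x t0 \<partial>lborel) \<noteq> 0"
    by (metis (no_types, lifting) less_irrefl nn_integral_cong nn_integral_const mult_zero_left)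
  define C where "C = {x. x \<in> A \<and> x - t0 \<in> B}"
  have Cb: "C \<in> sets borel" unfolding C_def using A B by measurable
  have "(\<integral>\<^sup>+x. f x t0 \<partial>lborel) = (\<integral>\<^sup>+x. indicator C x \<partial>lborel)"
    unfolding f_def C_def by (intro nn_integral_cong) (simp split: split_indicator)
  also have "\<dots> = emeasure lborel C" using Cb by simp
  finally have Cpos: "0 < emeasure lborel C" using t0 by (simp add: zero_less_iff_neq_zero)
  obtain \<delta> where \<delta>: "\<delta> > 0" "\<And>s. \<bar>s\<bar> < \<delta> \<Longrightarrow> \<exists>x\<in>C. x - s \<in> C"
    using steinhaus_nonempty[OF Cb Cpos] by blast
  obtain q where q: "q \<in> \<rat>" "t0 - \<delta> < q" "q < t0 + \<delta>"
    using Rats_dense_in_real[of "t0 - \<delta>" "t0 + \<delta>"] \<delta>(1) by auto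
  have "\<bar>q - t0\<bar> < \<delta>" using q by auto
  then obtain x where x: "x \<in> C" "x - (q - t0) \<in> C" using \<delta>(2) by blast
  then have "x \<in> A" "x - q \<in> B" by (auto simp: C_def)
  then show ?thesis using q(1) by blast
qed



context
  fixes f g :: "real \<Rightarrow> real" and r :: "nat \<Rightarrow> real"
begin

fun FG :: "nat \<Rightarrow> (real \<Rightarrow> real) \<times> (real \<Rightarrow> real)" where
  "FG 0 = (f, g)"
| "FG (Suc k) = (\<lambda>x. max 0 (fst (FG k) x - snd (FG k) (x - r k)),
                 \<lambda>y. max 0 (snd (FG k) y - fst (FG k) (y + r k)))"

definition hh :: "nat \<Rightarrow> real \<Rightarrow> real" where
  "hh k x = min (fst (FG k) x) (snd (FG k) (x - r k))"

lemma FG_meas: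
  assumes [measurable]: "f \<in> borel_measurable borel" "g \<in> borel_measurable borel"
  shows "fst (FG k) \<in> borel_measurable borel \<and> snd (FG k) \<in> borel_measurable borel"
proof (induction k)
  case 0 then show ?case by simp
next
  case (Suc k)
  then have [measurable]: "fst (FG k) \<in> borel_measurable borel" "snd (FG k) \<in> borel_measurable borel" by auto
  show ?case by simp
qed

lemma hh_meas:
  assumes "f \<in> borel_measurable borel" "g \<in> borel_measurable borel"
  shows "hh k \<in> borel_measurable borel"
proof -
  have [measurable]: "fst (FG k) \<in> borel_measurable borel" "snd (FG k) \<in> borel_measurable borel"
    using FG_meas[OF assms] by auto
  show ?thesis unfolding hh_def[abs_def] by measurable
qed

lemma FG_nonneg:
  assumes "\<And>x. 0 \<le> f x" "\<And>x. 0 \<le> g x"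
  shows "0 \<le> fst (FG k) x \<and> 0 \<le> snd (FG k) x"
  using assms by (cases k) auto

lemma hh_nonneg:
  assumes "\<And>x. 0 \<le> f x" "\<And>x. 0 \<le> g x"
  shows "0 \<le> hh k x"
  using FG_nonneg[OF assms] by (simp add: hh_def)

lemma FG_telescope:
  "f x = (\<Sum>j<k. hh j x) + fst (FG k) x \<and> g x = (\<Sum>j<k. hh j (x + r j)) + snd (FG k) x"
proof (induction k arbitrary: x)
  case 0 then show ?case by simp
next
  case (Suc k)
  have a: "fst (FG (Suc k)) x = fst (FG k) x - hh k x" by (simp add: hh_def)
  have b: "snd (FG (Suc k)) x = snd (FG k) x - hh k (x + r k)" by (simp add: hh_def)
  show ?case using Suc[of x] a b by simp
qed

lemma FG_min_zero: "min (fst (FG (Suc k)) x) (snd (FG (Suc k)) (x - r k)) = 0"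
  by auto

end



lemma greedy_complete:
  fixes f g :: "real \<Rightarrow> real" and r :: "nat \<Rightarrow> real"
  assumes fm[measurable]: "f \<in> borel_measurable borel" and gm[measurable]: "g \<in> borel_measurable borel"
    and f0: "\<And>x. 0 \<le> f x" and g0: "\<And>x. 0 \<le> g x"
    and If: "(\<integral>\<^sup>+x. ennreal (f x) \<partial>lborel) = 1" and Ig: "(\<integral>\<^sup>+x. ennreal (g x) \<partial>lborel) = 1"
    and rsurj: "\<And>q. q \<in> \<rat> \<Longrightarrow> \<exists>k. r k = q"
  shows "(AE x in lborel. ennreal (f x) = (\<Sum>j. ennreal (hh f g r j x))) \<and>
         (AE y in lborel. ennreal (g y) = (\<Sum>j. ennreal (hh f g r j (y + r j))))"
proof -
  let ?h = "hh f g r"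
  let ?F = "\<lambda>k. fst (FG f g r k)" and ?G = "\<lambda>k. snd (FG f g r k)"
  have hm[measurable]: "?h j \<in> borel_measurable borel" for j using hh_meas[OF fm gm] .
  have h0: "0 \<le> ?h j x" for j x using hh_nonneg[OF f0 g0] .
  have F0: "0 \<le> ?F k x" "0 \<le> ?G k x" for k x using FG_nonneg[OF f0 g0] by auto
  have tel: "f x = (\<Sum>j<k. ?h j x) + ?F k x" "g x = (\<Sum>j<k. ?h j (x + r j)) + ?G k x" for k x
    using FG_telescope[where f=f and g=g and r=r] by auto
  have sf: "summable (\<lambda>j. ?h j x)" for x
  proof (rule summableI_nonneg_bounded[where x="f x"])
    show "(\<Sum>j<n. ?h j x) \<le> f x" for n using tel(1)[of x n] F0(1)[of n x] by linarith
  qed (rule h0)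
  have sg: "summable (\<lambda>j. ?h j (x + r j))" for x
  proof (rule summableI_nonneg_bounded[where x="g x"])
    show "(\<Sum>j<n. ?h j (x + r j)) \<le> g x" for n using tel(2)[of x n] F0(2)[of n x] by linarith
  qed (rule h0)
  define Fi where "Fi x = f x - (\<Sum>j. ?h j x)" for x
  define Gi where "Gi x = g x - (\<Sum>j. ?h j (x + r j))" for x
  have Fi0: "0 \<le> Fi x" for x
  proof -
    have "(\<Sum>j. ?h j x) \<le> f x"
    proof (rule suminf_le_const[OF sf])
      show "(\<Sum>j<n. ?h j x) \<le> f x" for n using tel(1)[of x n] F0(1)[of n x] by linarith
    qed
    then show ?thesis unfolding Fi_def by linarith
  qed
  have Gi0: "0 \<le> Gi x" for x
  proof -
    have "(\<Sum>j. ?h j (x + r j)) \<le> g x"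
    proof (rule suminf_le_const[OF sg])
      show "(\<Sum>j<n. ?h j (x + r j)) \<le> g x" for n using tel(2)[of x n] F0(2)[of n x] by linarith
    qed
    then show ?thesis unfolding Gi_def by linarith
  qed
  have FiF: "Fi x \<le> ?F k x" for k x
    unfolding Fi_def using sum_le_suminf[OF sf, of "{..<k}" x] h0 tel(1)[of x k] by auto
  have GiG: "Gi x \<le> ?G k x" for k x
    unfolding Gi_def using sum_le_suminf[OF sg, of "{..<k}" x] h0 tel(2)[of x k] by auto
  have minz: "min (Fi x) (Gi (x - r k)) = 0" for x k
  proof -
    have "min (?F (Suc k) x) (?G (Suc k) (x - r k)) = 0" by (rule FG_min_zero)
    then show ?thesis using FiF[of x "Suc k"] GiG[of "x - r k" "Suc k"] Fi0[of x] Gi0[of "x - r k"]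
      by linarith
  qed
  have Fim[measurable]: "Fi \<in> borel_measurable borel" unfolding Fi_def[abs_def] by measurable
  have Gim[measurable]: "Gi \<in> borel_measurable borel" unfolding Gi_def[abs_def] by measurable
  define A where "A = {x. 0 < Fi x}"
  define B where "B = {x. 0 < Gi x}"
  have Ab: "A \<in> sets borel" unfolding A_def by measurable
  have Bb: "B \<in> sets borel" unfolding B_def by measurable
  have AB: "emeasure lborel A = 0 \<or> emeasure lborel B = 0"
  proof (rule ccontr)
    assume "\<not> ?thesis"
    then have "0 < emeasure lborel A" "0 < emeasure lborel B" by (auto simp: zero_less_iff_neq_zero)
    then obtain q x where "q \<in> \<rat>" "x \<in> A" "x - q \<in> B"
      using rational_shift_overlap[OF Ab Bb] by blast
    moreover obtain k where "r k = q" using rsurj[OF \<open>q \<in> \<rat>\<close>] by blast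
    ultimately show False using minz[of x k] by (auto simp: A_def B_def)
  qed
  have ef: "ennreal (f x) = ennreal (Fi x) + (\<Sum>j. ennreal (?h j x))" for x
  proof -
    have "(\<Sum>j. ennreal (?h j x)) = ennreal (\<Sum>j. ?h j x)" using suminf_ennreal2[OF h0 sf] .
    moreover have "0 \<le> (\<Sum>j. ?h j x)" using suminf_nonneg[OF sf] h0 by auto
    ultimately show ?thesis using Fi0[of x] by (simp add: Fi_def ennreal_plus[symmetric] del: ennreal_plus)
  qed
  have eg: "ennreal (g x) = ennreal (Gi x) + (\<Sum>j. ennreal (?h j (x + r j)))" for x
  proof -
    have "(\<Sum>j. ennreal (?h j (x + r j))) = ennreal (\<Sum>j. ?h j (x + r j))" using suminf_ennreal2[OF h0 sg] .
    moreover have "0 \<le> (\<Sum>j. ?h j (x + r j))" using suminf_nonneg[OF sg] h0 by auto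
    ultimately show ?thesis using Gi0[of x] by (simp add: Gi_def ennreal_plus[symmetric] del: ennreal_plus)
  qed
  define S where "S = (\<Sum>j. \<integral>\<^sup>+x. ennreal (?h j x) \<partial>lborel)"
  have S1: "(\<integral>\<^sup>+x. (\<Sum>j. ennreal (?h j x)) \<partial>lborel) = S"
    unfolding S_def by (rule nn_integral_suminf) measurable
  have tr: "(\<integral>\<^sup>+y. ennreal (?h j (y + r j)) \<partial>lborel) = (\<integral>\<^sup>+x. ennreal (?h j x) \<partial>lborel)" for j
    using nn_integral_real_affine[of "\<lambda>x. ennreal (?h j x)" 1 "r j"] by (simp add: add.commute)
  have S2: "(\<integral>\<^sup>+y. (\<Sum>j. ennreal (?h j (y + r j))) \<partial>lborel) = S"
    unfolding S_def by (subst nn_integral_suminf) (measurable, simp add: tr)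
  have 1: "1 = (\<integral>\<^sup>+x. ennreal (Fi x) \<partial>lborel) + S"
    using If unfolding ef by (subst (asm) nn_integral_add) (measurable, simp add: S1)
  have 2: "1 = (\<integral>\<^sup>+x. ennreal (Gi x) \<partial>lborel) + S"
    using Ig unfolding eg by (subst (asm) nn_integral_add) (measurable, simp add: S2)
  have Sfin: "S \<noteq> \<infinity>" using 1 by (metis add_top_right_ennreal ennreal_one_neq_top infinity_ennreal_def)
  have IFG: "(\<integral>\<^sup>+x. ennreal (Fi x) \<partial>lborel) = (\<integral>\<^sup>+x. ennreal (Gi x) \<partial>lborel)"
    using 1 2 Sfin by (metis add.commute ennreal_add_left_cancel)
  have "(\<integral>\<^sup>+x. ennreal (Fi x) \<partial>lborel) = 0"
  proof (cases "emeasure lborel A = 0")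
    case True
    then have "A \<in> null_sets lborel" using Ab by (simp add: null_sets_def)
    then have "AE x in lborel. x \<notin> A" by (rule AE_not_in)
    then have "AE x in lborel. ennreal (Fi x) = 0" by eventually_elim (auto simp: A_def ennreal_eq_0_iff)
    then show ?thesis by (subst nn_integral_0_iff_AE) auto
  next
    case False
    then have "B \<in> null_sets lborel" using AB Bb by (simp add: null_sets_def)
    then have "AE x in lborel. x \<notin> B" by (rule AE_not_in)
    then have "AE x in lborel. ennreal (Gi x) = 0" by eventually_elim (auto simp: B_def ennreal_eq_0_iff)
    then have "(\<integral>\<^sup>+x. ennreal (Gi x) \<partial>lborel) = 0" by (subst nn_integral_0_iff_AE) auto
    then show ?thesis using IFG by simp
  qed
  then have IF0: "(\<integral>\<^sup>+x. ennreal (Fi x) \<partial>lborel) = 0" .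
  then have IG0: "(\<integral>\<^sup>+x. ennreal (Gi x) \<partial>lborel) = 0" using IFG by simp
  have "AE x in lborel. ennreal (Fi x) = 0" using IF0 by (subst (asm) nn_integral_0_iff_AE) auto
  moreover have "AE x in lborel. ennreal (Gi x) = 0" using IG0 by (subst (asm) nn_integral_0_iff_AE) auto
  ultimately show ?thesis
  proof (intro conjI)
    show "AE x in lborel. ennreal (f x) = (\<Sum>j. ennreal (?h j x))"
      using \<open>AE x in lborel. ennreal (Fi x) = 0\<close> by eventually_elim (simp add: ef)
    show "AE x in lborel. ennreal (g x) = (\<Sum>j. ennreal (?h j (x + r j)))"
      using \<open>AE x in lborel. ennreal (Gi x) = 0\<close> by eventually_elim (simp add: eg)
  qed

qed



lemma density_real:
  fixes \<mu> :: "real measure"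
  assumes "prob_space \<mu>" "sets \<mu> = sets borel" "absolutely_continuous lborel \<mu>"
  shows "\<exists>f. f \<in> borel_measurable borel \<and> (\<forall>x. 0 \<le> f x) \<and>
             \<mu> = density lborel (\<lambda>x. ennreal (f x)) \<and> (\<integral>\<^sup>+x. ennreal (f x) \<partial>lborel) = 1"
proof -
  obtain f' where f': "f' \<in> borel_measurable lborel" "density lborel f' = \<mu>"
    using sigma_finite_measure.Radon_Nikodym[OF lborel.sigma_finite_measure_axioms assms(3)] assms(2) by auto
  have sp: "space \<mu> = UNIV" using assms(2) by (metis sets_eq_imp_space_eq space_borel)
  have "emeasure \<mu> (space \<mu>) = 1" using assms(1) by (simp add: prob_space.emeasure_space_1)
  then have "emeasure (density lborel f') UNIV = 1" using f'(2) sp by simp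
  then have I1: "(\<integral>\<^sup>+x. f' x \<partial>lborel) = 1" using f'(1) by (simp add: emeasure_density)
  have fin: "AE x in lborel. f' x \<noteq> \<infinity>"
    using nn_integral_PInf_AE[OF f'(1)] I1 by simp
  define f where "f x = enn2real (f' x)" for x
  have fm: "f \<in> borel_measurable borel" using f'(1) unfolding f_def[abs_def] by simp
  have ae: "AE x in lborel. ennreal (f x) = f' x"
    using fin by eventually_elim (simp add: f_def less_top[symmetric])
  have d: "density lborel (\<lambda>x. ennreal (f x)) = density lborel f'"
    using fm f'(1) ae by (intro density_cong) auto
  have "(\<integral>\<^sup>+x. ennreal (f x) \<partial>lborel) = 1"
    using I1 ae by (subst nn_integral_cong_AE[OF ae])
  then show ?thesis using fm d f'(2) by (intro exI[of _ f]) (auto simp: f_def)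
qed


theorem corollary8p6:
  fixes \<mu> \<nu> :: "real measure"
  assumes "prob_space \<mu>" and "sets \<mu> = sets borel"
      and "absolutely_continuous lborel \<mu>"
      and "prob_space \<nu>" and "sets \<nu> = sets borel"
      and "absolutely_continuous lborel \<nu>"
  shows "\<exists>(M :: (real \<times> real) measure) X Y.
           prob_space M \<and>
           X \<in> borel_measurable M \<and> Y \<in> borel_measurable M \<and>
           distr M borel X = \<mu> \<and> distr M borel Y = \<nu> \<and>
           (AE \<omega> in M. X \<omega> - Y \<omega> \<in> \<rat>)"
proof -
  obtain f where f: "f \<in> borel_measurable borel" "\<forall>x. 0 \<le> f x"
      "\<mu> = density lborel (\<lambda>x. ennreal (f x))" "(\<integral>\<^sup>+x. ennreal (f x) \<partial>lborel) = 1"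
    using density_real[OF assms(1-3)] by blast
  obtain g where g: "g \<in> borel_measurable borel" "\<forall>x. 0 \<le> g x"
      "\<nu> = density lborel (\<lambda>x. ennreal (g x))" "(\<integral>\<^sup>+x. ennreal (g x) \<partial>lborel) = 1"
    using density_real[OF assms(4-6)] by blast
  define r :: "nat \<Rightarrow> real" where "r k = real_of_rat (from_nat k)" for k
  have rQ: "r k \<in> \<rat>" for k by (simp add: r_def)
  have rsurj: "\<exists>k. r k = q" if "q \<in> \<rat>" for q
  proof -
    from that obtain q' where "q = real_of_rat q'" by (auto simp: Rats_def)
    then show ?thesis by (intro exI[of _ "to_nat q'"]) (simp add: r_def)
  qed
  let ?h = "hh f g r"
  have hm[measurable]: "?h j \<in> borel_measurable borel" for j using hh_meas f(1) g(1) by blast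
  have ae: "(AE x in lborel. ennreal (f x) = (\<Sum>j. ennreal (?h j x))) \<and>
         (AE y in lborel. ennreal (g y) = (\<Sum>j. ennreal (?h j (y + r j))))"
    using greedy_complete[OF f(1) g(1) _ _ f(4) g(4) rsurj] f(2) g(2) by blast
  have aef: "AE x in lborel. ennreal (f x) = (\<Sum>j. ennreal (?h j x))" using ae by blast
  have aeg: "AE y in lborel. ennreal (g y) = (\<Sum>j. ennreal (?h j (y + r j)))" using ae by blast
  define N :: "real measure" where "N = count_space \<nat>"
  have cN: "countable (\<nat> :: real set)" by (simp add: Nats_def)
  interpret N: sigma_finite_measure N unfolding N_def by (rule sigma_finite_measure_count_space_countable[OF cN])
  define P :: "(real \<times> real) measure" where "P = (lborel :: real measure) \<Otimes>\<^sub>M N"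
  have spP: "space P = UNIV \<times> \<nat>" by (simp add: P_def N_def space_pair_measure)
  define H where "H z = ennreal (?h (nat \<lfloor>snd z\<rfloor>) (fst z))" for z :: "real \<times> real"
  define Yf where "Yf z = fst z - r (nat \<lfloor>snd z\<rfloor>)" for z :: "real \<times> real"
  have idx: "(\<lambda>z. nat \<lfloor>snd z\<rfloor>) \<in> measurable P (count_space UNIV)"
    unfolding P_def N_def by (rule measurable_compose[OF measurable_snd]) simp
  have fstm: "fst \<in> borel_measurable P" unfolding P_def by measurable
  have Hm: "H \<in> borel_measurable P"
    unfolding H_def
    by (rule measurable_compose_countable[where g="\<lambda>z. nat \<lfloor>snd z\<rfloor>" and f="\<lambda>i z. ennreal (?h i (fst z))", OF _ idx])
       (use fstm in measurable)
  have Ym: "Yf \<in> borel_measurable P"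
    unfolding Yf_def
    by (rule measurable_compose_countable[where g="\<lambda>z. nat \<lfloor>snd z\<rfloor>" and f="\<lambda>i z. fst z - r i", OF _ idx])
       (use fstm in measurable)
  have bij: "bij_betw (real :: nat \<Rightarrow> real) UNIV \<nat>" by (auto simp: bij_betw_def inj_on_def Nats_def)
  have formula: "(\<integral>\<^sup>+z. H z * \<phi> z \<partial>P) = (\<integral>\<^sup>+x. (\<Sum>j. ennreal (?h j x) * \<phi> (x, real j)) \<partial>lborel)"
    if phim: "\<phi> \<in> borel_measurable P" for \<phi>
  proof -
    have "(\<lambda>z. H z * \<phi> z) \<in> borel_measurable P" using Hm phim by measurable
    then have "(\<integral>\<^sup>+z. H z * \<phi> z \<partial>P) = (\<integral>\<^sup>+x. \<integral>\<^sup>+t. H (x,t) * \<phi> (x,t) \<partial>N \<partial>lborel)"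
      unfolding P_def by (intro N.nn_integral_fst[symmetric]) simp
    also have "\<dots> = (\<integral>\<^sup>+x. (\<Sum>j. ennreal (?h j x) * \<phi> (x, real j)) \<partial>lborel)"
    proof (rule nn_integral_cong)
      fix x
      have "(\<integral>\<^sup>+t. H (x,t) * \<phi> (x,t) \<partial>N) = (\<integral>\<^sup>+j. H (x, real j) * \<phi> (x, real j) \<partial>count_space UNIV)"
        using nn_integral_bij_count_space[OF bij, of "\<lambda>t. H (x,t) * \<phi> (x,t)"] by (simp add: N_def)
      also have "\<dots> = (\<Sum>j. H (x, real j) * \<phi> (x, real j))" by (rule nn_integral_count_space_nat)
      finally show "(\<integral>\<^sup>+t. H (x,t) * \<phi> (x,t) \<partial>N) = (\<Sum>j. ennreal (?h j x) * \<phi> (x, real j))"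
        by (simp add: H_def)
    qed
    finally show ?thesis .
  qed
  define M where "M = density P H"
  have sM: "sets M = sets P" and spM: "space M = space P" by (simp_all add: M_def)
  have measM: "measurable M = measurable P" by (rule ext, rule measurable_cong_sets[OF sM refl])
  have eM: "emeasure M A = (\<integral>\<^sup>+z. H z * indicator A z \<partial>P)" if "A \<in> sets P" for A
    unfolding M_def using that Hm by (simp add: emeasure_density)
  have prob: "prob_space M"
  proof (rule prob_spaceI)
    have "emeasure M (space M) = (\<integral>\<^sup>+x. (\<Sum>j. ennreal (?h j x) * indicator (space P) (x, real j)) \<partial>lborel)"
      using eM[of "space P"] formula[of "indicator (space P)"] spM by simp
    also have "\<dots> = (\<integral>\<^sup>+x. ennreal (f x) \<partial>lborel)"
      using aef by (intro nn_integral_cong_AE) (auto elim!: eventually_mono simp: spP)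
    finally show "emeasure M (space M) = 1" using f(4) by simp
  qed
  have Xm: "fst \<in> borel_measurable M" by (subst measurable_cong_sets[OF sM refl]) (rule fstm)
  have Ym': "Yf \<in> borel_measurable M" by (subst measurable_cong_sets[OF sM refl]) (rule Ym)
  have mX: "distr M borel fst = \<mu>"
  proof (rule measure_eqI)
    show "sets (distr M borel fst) = sets \<mu>" using assms(2) by simp
    fix A assume "A \<in> sets (distr M borel fst)"
    then have A: "A \<in> sets borel" by simp
    have pre: "fst -` A \<inter> space P \<in> sets P" using measurable_sets[OF fstm A] .
    have "emeasure (distr M borel fst) A = emeasure M (fst -` A \<inter> space M)"
      using Xm A by (simp add: emeasure_distr)
    also have "\<dots> = (\<integral>\<^sup>+x. (\<Sum>j. ennreal (?h j x) * indicator (fst -` A \<inter> space P) (x, real j)) \<partial>lborel)"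
      using eM[OF pre] formula[of "indicator (fst -` A \<inter> space P)"] pre spM by simp
    also have "\<dots> = (\<integral>\<^sup>+x. ennreal (f x) * indicator A x \<partial>lborel)"
    proof (rule nn_integral_cong_AE)
      show "AE x in lborel. (\<Sum>j. ennreal (?h j x) * indicator (fst -` A \<inter> space P) (x, real j)) = ennreal (f x) * indicator A x"
        using aef
      proof eventually_elim
        case (elim x)
        have "(\<Sum>j. ennreal (?h j x) * indicator (fst -` A \<inter> space P) (x, real j)) = (\<Sum>j. ennreal (?h j x) * indicator A x)"
          by (simp add: spP indicator_def)
        also have "\<dots> = ennreal (f x) * indicator A x" using elim(1) by simp
        finally show ?case .
      qed
    qed
    also have "\<dots> = emeasure \<mu> A" using f(3) A f(1) by (simp add: emeasure_density)
    finally show "emeasure (distr M borel fst) A = emeasure \<mu> A" .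
  qed
  have mY: "distr M borel Yf = \<nu>"
  proof (rule measure_eqI)
    show "sets (distr M borel Yf) = sets \<nu>" using assms(5) by simp
    fix A assume "A \<in> sets (distr M borel Yf)"
    then have A[measurable]: "A \<in> sets borel" by simp
    have pre: "Yf -` A \<inter> space P \<in> sets P" using measurable_sets[OF Ym A] .
    have "emeasure (distr M borel Yf) A = emeasure M (Yf -` A \<inter> space M)"
      using Ym' A by (simp add: emeasure_distr)
    also have "\<dots> = (\<integral>\<^sup>+x. (\<Sum>j. ennreal (?h j x) * indicator (Yf -` A \<inter> space P) (x, real j)) \<partial>lborel)"
      using eM[OF pre] formula[of "indicator (Yf -` A \<inter> space P)"] pre spM by simp
    also have "\<dots> = (\<integral>\<^sup>+x. (\<Sum>j. ennreal (?h j x) * indicator A (x - r j)) \<partial>lborel)"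
      by (intro nn_integral_cong suminf_cong) (simp add: spP Yf_def indicator_def)
    also have "\<dots> = (\<Sum>j. \<integral>\<^sup>+x. ennreal (?h j x) * indicator A (x - r j) \<partial>lborel)"
      by (rule nn_integral_suminf) measurable
    also have "\<dots> = (\<Sum>j. \<integral>\<^sup>+y. ennreal (?h j (y + r j)) * indicator A y \<partial>lborel)"
    proof (rule suminf_cong)
      fix j
      show "(\<integral>\<^sup>+x. ennreal (?h j x) * indicator A (x - r j) \<partial>lborel) = (\<integral>\<^sup>+y. ennreal (?h j (y + r j)) * indicator A y \<partial>lborel)"
        using nn_integral_real_affine[of "\<lambda>x. ennreal (?h j x) * indicator A (x - r j)" 1 "r j"]
        by (simp add: add.commute)
    qed
    also have "\<dots> = (\<integral>\<^sup>+y. (\<Sum>j. ennreal (?h j (y + r j)) * indicator A y) \<partial>lborel)"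
      by (rule nn_integral_suminf[symmetric]) measurable
    also have "\<dots> = (\<integral>\<^sup>+y. ennreal (g y) * indicator A y \<partial>lborel)"
    proof (rule nn_integral_cong_AE)
      show "AE y in lborel. (\<Sum>j. ennreal (?h j (y + r j)) * indicator A y) = ennreal (g y) * indicator A y"
        using aeg by (auto elim!: eventually_mono)
    qed
    also have "\<dots> = emeasure \<nu> A" using g(3) A g(1) by (simp add: emeasure_density)
    finally show "emeasure (distr M borel Yf) A = emeasure \<nu> A" .
  qed
  have aeQ: "AE \<omega> in M. fst \<omega> - Yf \<omega> \<in> \<rat>"
    by (rule AE_I2) (simp add: Yf_def rQ)
  show ?thesis
    by (intro exI[of _ M] exI[of _ fst] exI[of _ Yf]) (use prob Xm Ym' mX mY aeQ in blast)
qed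


end
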